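(* The octonionic hyperbolic plane $\mathbb OH^2=\{(u,v)\in\mathbb O^2:|u|^2+|v|^2<1\}$, equipped with the symmetric bilinear form whose quadratic form on tangent vectors $(du,dv)=(\xi,\eta)$ is $$ds^2=\frac{|\xi|^2(1-|v|^2)+|\eta|^2(1-|u|^2)+2\mathrm{Re}\big[(u\bar v)(\eta\bar\xi)\big]}{(1-|u|^2-|v|^2)^2},$$ is a $16$-dimensional simply connected Riemannian manifold (in particular this form is positive definite at every point).
   Context: Octonions $\mathbb O=\mathbb H\oplus\mathbb H$ with product $(q_1,q_2)(p_1,p_2)=(q_1p_1-\bar p_2q_2,\ p_2q_1+q_2\bar p_1)$, conjugation $\overline{(q_1,q_2)}=(\bar q_1,-q_2)$, $\langle a,b\rangle=\mathrm{Re}(a\bar b)$, $|a|^2=\langle a,a\rangle$; $\mathbb O^2$ is identified with $\mathbb R^{16}$. *)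

theory Defs
  imports "HOL-Analysis.Analysis"
begin

type_synonym quat = "real \<times> real \<times> real \<times> real"

fun qmult :: "quat \<Rightarrow> quat \<Rightarrow> quat" where
  "qmult (a1, b1, c1, d1) (a2, b2, c2, d2) =
     (a1*a2 - b1*b2 - c1*c2 - d1*d2,
      a1*b2 + b1*a2 + c1*d2 - d1*c2,
      a1*c2 - b1*d2 + c1*a2 + d1*b2,
      a1*d2 + b1*c2 - c1*b2 + d1*a2)"

fun qconj :: "quat \<Rightarrow> quat" where
  "qconj (a, b, c, d) = (a, -b, -c, -d)"

fun qadd :: "quat \<Rightarrow> quat \<Rightarrow> quat" where
  "qadd (a1, b1, c1, d1) (a2, b2, c2, d2) = (a1+a2, b1+b2, c1+c2, d1+d2)"

fun qneg :: "quat \<Rightarrow> quat" where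
  "qneg (a, b, c, d) = (-a, -b, -c, -d)"

fun qre :: "quat \<Rightarrow> real" where
  "qre (a, b, c, d) = a"

section \<open>Octonions O = H + H (Cayley--Dickson, as in the paper)\<close>

type_synonym oct = "quat \<times> quat"

fun omult :: "oct \<Rightarrow> oct \<Rightarrow> oct" where
  "omult (q1, q2) (p1, p2) =
     (qadd (qmult q1 p1) (qneg (qmult (qconj p2) q2)),
      qadd (qmult p2 q1) (qmult q2 (qconj p1)))"

fun oconj :: "oct \<Rightarrow> oct" where
  "oconj (q1, q2) = (qconj q1, qneg q2)"

fun ore :: "oct \<Rightarrow> real" where
  "ore (q1, q2) = qre q1"

definition oinner :: "oct \<Rightarrow> oct \<Rightarrow> real" where
  "oinner a b = ore (omult a (oconj b))"

definition onorm2 :: "oct \<Rightarrow> real" where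
  "onorm2 a = oinner a a"

definition oct_block :: "real^16 \<Rightarrow> nat \<Rightarrow> oct" where
  "oct_block x k =
    ((x $ of_nat k, x $ of_nat (k+1), x $ of_nat (k+2), x $ of_nat (k+3)),
     (x $ of_nat (k+4), x $ of_nat (k+5), x $ of_nat (k+6), x $ of_nat (k+7)))"

definition ucoord :: "real^16 \<Rightarrow> oct" where "ucoord x = oct_block x 0"
definition vcoord :: "real^16 \<Rightarrow> oct" where "vcoord x = oct_block x 8"

definition OH2 :: "(real^16) set" where
  "OH2 = {x. onorm2 (ucoord x) + onorm2 (vcoord x) < 1}"

definition ds2 :: "real^16 \<Rightarrow> real^16 \<Rightarrow> real" where
  "ds2 p w =
    (let u = ucoord p; v = vcoord p; xi = ucoord w; eta = vcoord w in
      (onorm2 xi * (1 - onorm2 v) + onorm2 eta * (1 - onorm2 u)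
        + 2 * ore (omult (omult u (oconj v)) (omult eta (oconj xi))))
      / (1 - onorm2 u - onorm2 v)^2)"

coinductive smooth_on :: "'a::euclidean_space set \<Rightarrow> ('a \<Rightarrow> real) \<Rightarrow> bool" where
  "\<lbrakk> \<forall>p\<in>S. f differentiable (at p);
     \<forall>b\<in>Basis. smooth_on S (\<lambda>p. frechet_derivative f (at p) b) \<rbrakk>
   \<Longrightarrow> smooth_on S f"

end

theory Submission
  imports Defs
begin

lemma idx16: "\<exists>k<16. (i::16) = of_nat k"
proof (cases i rule: bit0_cases)
  case (of_int z)
  then show ?thesis by (intro exI[of _ "nat z"]) auto
qed

lemma onorm2_expand: "onorm2 ((a0,a1,a2,a3),(a4,a5,a6,a7)) = a0^2+a1^2+a2^2+a3^2+a4^2+a5^2+a6^2+a7^2"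
  by (simp add: onorm2_def oinner_def power2_eq_square)

lemma onorm2_nonneg: "onorm2 x \<ge> 0"
  by (cases x) (auto simp: onorm2_expand)

lemma onorm2_conj: "onorm2 (oconj x) = onorm2 x"
  by (cases x) (auto simp: onorm2_expand)

lemma eight: "onorm2 (omult x y) = onorm2 x * onorm2 y"
  apply (cases x; cases y)
  apply (clarsimp simp: onorm2_expand)
  by (simp add: onorm2_def oinner_def power2_eq_square algebra_simps)

lemma lagrange8:
  fixes x0 x1 x2 x3 x4 x5 x6 x7 y0 y1 y2 y3 y4 y5 y6 y7 :: real
  shows "(x0^2+x1^2+x2^2+x3^2+x4^2+x5^2+x6^2+x7^2)*(y0^2+y1^2+y2^2+y3^2+y4^2+y5^2+y6^2+y7^2)
    - (x0*y0+x1*y1+x2*y2+x3*y3+x4*y4+x5*y5+x6*y6+x7*y7)^2 = (x0*y1 - x1*y0)^2 + (x0*y2 - x2*y0)^2 + (x0*y3 - x3*y0)^2 + (x0*y4 - x4*y0)^2 + (x0*y5 - x5*y0)^2 + (x0*y6 - x6*y0)^2 + (x0*y7 - x7*y0)^2 + (x1*y2 - x2*y1)^2 + (x1*y3 - x3*y1)^2 + (x1*y4 - x4*y1)^2 + (x1*y5 - x5*y1)^2 + (x1*y6 - x6*y1)^2 + (x1*y7 - x7*y1)^2 + (x2*y3 - x3*y2)^2 + (x2*y4 - x4*y2)^2 + (x2*y5 - x5*y2)^2 + (x2*y6 - x6*y2)^2 + (x2*y7 - x7*y2)^2 + (x3*y4 - x4*y3)^2 + (x3*y5 - x5*y3)^2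 + (x3*y6 - x6*y3)^2 + (x3*y7 - x7*y3)^2 + (x4*y5 - x5*y4)^2 + (x4*y6 - x6*y4)^2 + (x4*y7 - x7*y4)^2 + (x5*y6 - x6*y5)^2 + (x5*y7 - x7*y5)^2 + (x6*y7 - x7*y6)^2"
  by (simp add: power2_eq_square algebra_simps)

lemma cs8:
  fixes x0 x1 x2 x3 x4 x5 x6 x7 y0 y1 y2 y3 y4 y5 y6 y7 :: real
  shows "(x0*y0+x1*y1+x2*y2+x3*y3+x4*y4+x5*y5+x6*y6+x7*y7)^2 \<le> (x0^2+x1^2+x2^2+x3^2+x4^2+x5^2+x6^2+x7^2)*(y0^2+y1^2+y2^2+y3^2+y4^2+y5^2+y6^2+y7^2)"
proof -
  have "0 \<le> (x0*y1 - x1*y0)^2 + (x0*y2 - x2*y0)^2 + (x0*y3 - x3*y0)^2 + (x0*y4 - x4*y0)^2 + (x0*y5 - x5*y0)^2 + (x0*y6 - x6*y0)^2 + (x0*y7 - x7*y0)^2 + (x1*y2 - x2*y1)^2 + (x1*y3 - x3*y1)^2 + (x1*y4 - x4*y1)^2 + (x1*y5 - x5*y1)^2 + (x1*y6 - x6*y1)^2 + (x1*y7 - x7*y1)^2 + (x2*y3 - x3*y2)^2 + (x2*y4 - x4*y2)^2 + (x2*y5 - x5*y2)^2 + (x2*y6 - x6*y2)^2 + (x2*y7 - x7*y2)^2 + (x3*y4 - x4*y3)^2 + (x3*y5 - x5*y3)^2 + (x3*y6 - x6*y3)^2 + (x3*y7 - x7*y3)^2 + (x4*y5 - x5*y4)^2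 + (x4*y6 - x6*y4)^2 + (x4*y7 - x7*y4)^2 + (x5*y6 - x6*y5)^2 + (x5*y7 - x7*y5)^2 + (x6*y7 - x7*y6)^2" by (intro add_nonneg_nonneg zero_le_power2)
  then show ?thesis using lagrange8[of x0 x1 x2 x3 x4 x5 x6 x7 y0 y1 y2 y3 y4 y5 y6 y7] by linarith
qed

lemma ore_cs: "(ore (omult x y))^2 \<le> onorm2 x * onorm2 y"
proof -
  obtain a0 a1 a2 a3 a4 a5 a6 a7 where x: "x = ((a0,a1,a2,a3),(a4,a5,a6,a7))" by (metis prod.exhaust)
  obtain b0 b1 b2 b3 b4 b5 b6 b7 where y: "y = ((b0,b1,b2,b3),(b4,b5,b6,b7))" by (metis prod.exhaust)
  have "ore (omult x y) = a0*b0+a1*(-b1)+a2*(-b2)+a3*(-b3)+a4*(-b4)+a5*(-b5)+a6*(-b6)+a7*(-b7)"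
    by (simp add: x y algebra_simps)
  moreover have "onorm2 y = b0^2+(-b1)^2+(-b2)^2+(-b3)^2+(-b4)^2+(-b5)^2+(-b6)^2+(-b7)^2"
    by (simp add: y onorm2_expand)
  ultimately show ?thesis using cs8[of a0 b0 a1 "-b1" a2 "-b2" a3 "-b3" a4 "-b4" a5 "-b5" a6 "-b6" a7 "-b7"]
    by (simp add: x onorm2_expand)
qed

lemma key_ineq:
  fixes A B U V R :: real
  assumes "A \<ge> 0" "B \<ge> 0" "U \<ge> 0" "V \<ge> 0" "U + V < 1" "A + B > 0" "R^2 \<le> U*V*(A*B)"
  shows "A*(1-V) + B*(1-U) + 2*R > 0"
proof -
  define L where "L = A*(1-V) + B*(1-U)"
  have Lpos: "L > 0" unfolding L_def using assms
    by (smt (verit, best) mult_nonneg_nonneg mult_pos_pos)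
  have id: "L^2 - 4*(U*V*(A*B)) = (A*(1-V) - B*(1-U))^2 + 4*(A*B)*(1-U-V)"
    unfolding L_def by (simp add: power2_eq_square algebra_simps)
  have "(2*R)^2 < L^2"
  proof (cases "A*B = 0")
    case True
    then have "R^2 \<le> 0" using assms(7) by (metis mult_zero_right)
    then have "R^2 = 0" by (smt (verit) zero_le_power2)
    then have "R = 0" by simp
    then show ?thesis using Lpos by simp
  next
    case False
    then have "A*B > 0" using assms by (simp add: less_le)
    then have "4*(A*B)*(1-U-V) > 0" using assms by simp
    then have "L^2 - 4*(U*V*(A*B)) > 0" using id by (smt (verit) zero_le_power2)
    then show ?thesis using assms(7) by (simp add: power_mult_distrib)
  qed
  then have "\<bar>2*R\<bar> < L" using Lpos by (metis abs_of_pos power2_abs power_less_imp_less_base less_imp_le)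
  then show ?thesis unfolding L_def by linarith
qed

inductive rpoly :: "(real^16 \<Rightarrow> real) \<Rightarrow> bool" where
  rp_const: "rpoly (\<lambda>x. c)"
| rp_var: "rpoly (\<lambda>x. x $ i)"
| rp_add: "rpoly f \<Longrightarrow> rpoly g \<Longrightarrow> rpoly (\<lambda>x. f x + g x)"
| rp_mult: "rpoly f \<Longrightarrow> rpoly g \<Longrightarrow> rpoly (\<lambda>x. f x * g x)"

lemma rp_uminus: "rpoly f \<Longrightarrow> rpoly (\<lambda>x. - f x)"
  using rp_mult[OF rp_const[of "-1"]] by simp

lemma rp_diff: "rpoly f \<Longrightarrow> rpoly g \<Longrightarrow> rpoly (\<lambda>x. f x - g x)"
  using rp_add[OF _ rp_uminus] by simp

lemma rp_power: "rpoly f \<Longrightarrow> rpoly (\<lambda>x. f x ^ n)"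
  by (induction n) (auto intro: rp_const rp_mult)

lemma rpoly_deriv:
  "rpoly f \<Longrightarrow> \<exists>f'. (\<forall>p. (f has_derivative f' p) (at p)) \<and> (\<forall>b. rpoly (\<lambda>p. f' p b))"
proof (induction rule: rpoly.induct)
  case (rp_const c)
  show ?case by (intro exI[of _ "\<lambda>p h. 0"]) (auto intro: rpoly.intros)
next
  case (rp_var i)
  show ?case by (intro exI[of _ "\<lambda>p h. h $ i"])
     (auto intro: rpoly.intros bounded_linear_imp_has_derivative)
next
  case (rp_add f g)
  then obtain f' g' where "\<forall>p. (f has_derivative f' p) (at p)" "\<forall>b. rpoly (\<lambda>p. f' p b)"
    "\<forall>p. (g has_derivative g' p) (at p)" "\<forall>b. rpoly (\<lambda>p. g' p b)" by blast
  then show ?case by (intro exI[of _ "\<lambda>p h. f' p h + g' p h"])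
     (auto intro: rpoly.intros has_derivative_add)
next
  case (rp_mult f g)
  then obtain f' g' where "\<forall>p. (f has_derivative f' p) (at p)" "\<forall>b. rpoly (\<lambda>p. f' p b)"
    "\<forall>p. (g has_derivative g' p) (at p)" "\<forall>b. rpoly (\<lambda>p. g' p b)" by blast
  moreover have "rpoly (\<lambda>p. f p * g' p b + f' p b * g p)" for b
  proof -
    have a: "rpoly (\<lambda>p. g' p b)" "rpoly (\<lambda>p. f' p b)" using calculation by blast+
    show ?thesis by (rule rpoly.rp_add[OF rpoly.rp_mult[OF rp_mult.hyps(1) a(1)] rpoly.rp_mult[OF a(2) rp_mult.hyps(2)]])
  qed
  ultimately show ?case by (intro exI[of _ "\<lambda>p h. f p * g' p h + f' p h * g p"])
     (auto intro!: has_derivative_mult)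
qed

lemma rpoly_cont: "rpoly f \<Longrightarrow> continuous_on UNIV f"
  using rpoly_deriv by (meson continuous_at_imp_continuous_on has_derivative_continuous)

lemma smooth_rat:
  assumes S: "open S" and P: "rpoly P" and Q: "rpoly Q" and nz: "\<forall>p\<in>S. Q p \<noteq> 0"
    and g: "\<forall>p\<in>S. g p = P p / Q p"
  shows "smooth_on S g"
proof -
  define X where "X = (\<lambda>S' (g'::real^16\<Rightarrow>real). S' = S \<and> (\<exists>P Q. rpoly P \<and> rpoly Q \<and> (\<forall>p\<in>S. Q p \<noteq> 0)
      \<and> (\<forall>p\<in>S. g' p = P p / Q p)))"
  have "X S g" unfolding X_def using assms by blast
  then show ?thesis
  proof (coinduction arbitrary: g rule: smooth_on.coinduct)
    case (smooth_on g)
    then obtain P Q where P: "rpoly P" and Q: "rpoly Q" and nz: "\<forall>p\<in>S. Q p \<noteq> 0"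
      and g: "\<forall>p\<in>S. g p = P p / Q p" unfolding X_def by blast
    obtain P' where P': "\<forall>p. (P has_derivative P' p) (at p)" "\<forall>b. rpoly (\<lambda>p. P' p b)"
      using rpoly_deriv[OF P] by blast
    obtain Q' where Q': "\<forall>p. (Q has_derivative Q' p) (at p)" "\<forall>b. rpoly (\<lambda>p. Q' p b)"
      using rpoly_deriv[OF Q] by blast
    have D: "(g has_derivative (\<lambda>h. - P p * (inverse (Q p) * Q' p h * inverse (Q p)) + P' p h / Q p)) (at p)"
      if "p \<in> S" for p
    proof (rule has_derivative_transform_within_open[OF _ S that])
      show "((\<lambda>x. P x / Q x) has_derivative (\<lambda>h. - P p * (inverse (Q p) * Q' p h * inverse (Q p)) + P' p h / Q p)) (at p)"
        by (rule has_derivative_divide) (use P' Q' nz that in auto)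
      show "\<And>x. x \<in> S \<Longrightarrow> P x / Q x = g x" using g by simp
    qed
    have diff: "\<forall>p\<in>S. g differentiable (at p)" using D unfolding differentiable_def by blast
    have der: "X S (\<lambda>p. frechet_derivative g (at p) b)" for b
    proof -
      have "\<forall>p\<in>S. frechet_derivative g (at p) b = (P' p b * Q p - P p * Q' p b) / (Q p * Q p)"
      proof
        fix p assume "p \<in> S"
        have "frechet_derivative g (at p) b = - P p * (inverse (Q p) * Q' p b * inverse (Q p)) + P' p b / Q p"
          using frechet_derivative_at[OF D[OF \<open>p \<in> S\<close>], symmetric] by simp
        also have "\<dots> = (P' p b * Q p - P p * Q' p b) / (Q p * Q p)"
          using nz \<open>p \<in> S\<close> by (simp add: field_simps)
        finally show "frechet_derivative g (at p) b = (P' p b * Q p - P p * Q' p b) / (Q p * Q p)" .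
      qed
      moreover have "rpoly (\<lambda>p. P' p b * Q p - P p * Q' p b)"
        using P Q P'(2) Q'(2) by (intro rp_diff rp_mult) auto
      moreover have "rpoly (\<lambda>p. Q p * Q p)" using Q by (intro rp_mult)
      moreover have "\<forall>p\<in>S. Q p * Q p \<noteq> 0" using nz by simp
      ultimately show ?thesis unfolding X_def by blast
    qed
    show ?case using diff der by (intro exI[of _ S] exI[of _ g]) auto
  qed
qed

lemma octE: obtains a0 a1 a2 a3 a4 a5 a6 a7 where "x = ((a0,a1,a2,a3),(a4,a5,a6,a7))"
  by (metis prod.exhaust)

fun oadd :: "oct \<Rightarrow> oct \<Rightarrow> oct" where
  "oadd ((a0,a1,a2,a3),(a4,a5,a6,a7)) ((b0,b1,b2,b3),(b4,b5,b6,b7)) =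
     ((a0+b0,a1+b1,a2+b2,a3+b3),(a4+b4,a5+b5,a6+b6,a7+b7))"
fun osc :: "real \<Rightarrow> oct \<Rightarrow> oct" where
  "osc c ((a0,a1,a2,a3),(a4,a5,a6,a7)) = ((c*a0,c*a1,c*a2,c*a3),(c*a4,c*a5,c*a6,c*a7))"

lemma ucoord_add: "ucoord (x + y) = oadd (ucoord x) (ucoord y)"
  by (simp add: ucoord_def oct_block_def)
lemma vcoord_add: "vcoord (x + y) = oadd (vcoord x) (vcoord y)"
  by (simp add: vcoord_def oct_block_def)
lemma ucoord_sc: "ucoord (c *\<^sub>R x) = osc c (ucoord x)"
  by (simp add: ucoord_def oct_block_def)
lemma vcoord_sc: "vcoord (c *\<^sub>R x) = osc c (vcoord x)"
  by (simp add: vcoord_def oct_block_def)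

lemma oinner_add1: "oinner (oadd x y) z = oinner x z + oinner y z"
  by (cases x rule: octE; cases y rule: octE; cases z rule: octE) (simp add: oinner_def algebra_simps)
lemma oinner_add2: "oinner z (oadd x y) = oinner z x + oinner z y"
  by (cases x rule: octE; cases y rule: octE; cases z rule: octE) (simp add: oinner_def algebra_simps)
lemma oinner_sc1: "oinner (osc c x) z = c * oinner x z"
  by (cases x rule: octE; cases z rule: octE) (simp add: oinner_def algebra_simps)
lemma oinner_sc2: "oinner z (osc c x) = c * oinner z x"
  by (cases x rule: octE; cases z rule: octE) (simp add: oinner_def algebra_simps)
lemma oinner_sym: "oinner x y = oinner y x"
  by (cases x rule: octE; cases y rule: octE) (simp add: oinner_def algebra_simps)

definition T :: "oct \<Rightarrow> oct \<Rightarrow> oct \<Rightarrow> real" where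
  "T m y z = ore (omult m (omult y (oconj z)))"

lemma T_add1: "T m (oadd x y) z = T m x z + T m y z"
  unfolding T_def by (cases m rule: octE; cases x rule: octE; cases y rule: octE; cases z rule: octE) (simp add: algebra_simps)
lemma T_add2: "T m z (oadd x y) = T m z x + T m z y"
  unfolding T_def by (cases m rule: octE; cases x rule: octE; cases y rule: octE; cases z rule: octE) (simp add: algebra_simps)
lemma T_sc1: "T m (osc c x) z = c * T m x z"
  unfolding T_def by (cases m rule: octE; cases x rule: octE; cases z rule: octE) (simp add: algebra_simps)
lemma T_sc2: "T m z (osc c x) = c * T m z x"
  unfolding T_def by (cases m rule: octE; cases x rule: octE; cases z rule: octE) (simp add: algebra_simps)

definition Nf :: "real^16 \<Rightarrow> real^16 \<Rightarrow> real^16 \<Rightarrow> real" where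
  "Nf p a b = oinner (ucoord a) (ucoord b) * (1 - onorm2 (vcoord p))
     + oinner (vcoord a) (vcoord b) * (1 - onorm2 (ucoord p))
     + T (omult (ucoord p) (oconj (vcoord p))) (vcoord a) (ucoord b)
     + T (omult (ucoord p) (oconj (vcoord p))) (vcoord b) (ucoord a)"

definition Df :: "real^16 \<Rightarrow> real" where
  "Df p = 1 - onorm2 (ucoord p) - onorm2 (vcoord p)"

definition Bf :: "real^16 \<Rightarrow> real^16 \<Rightarrow> real^16 \<Rightarrow> real" where
  "Bf p a b = Nf p a b / (Df p)^2"

lemmas lin_simps = Nf_def ucoord_add vcoord_add ucoord_sc vcoord_sc
          oinner_add1 oinner_add2 oinner_sc1 oinner_sc2 T_add1 T_add2 T_sc1 T_sc2

lemma Nf_add2: "Nf p x (a + b) = Nf p x a + Nf p x b"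
  by (simp add: lin_simps algebra_simps)
lemma Nf_add1: "Nf p (a + b) x = Nf p a x + Nf p b x"
  by (simp add: lin_simps algebra_simps)
lemma Nf_sc2: "Nf p x (c *\<^sub>R a) = c * Nf p x a"
  by (simp add: lin_simps algebra_simps)
lemma Nf_sc1: "Nf p (c *\<^sub>R a) x = c * Nf p a x"
  by (simp add: lin_simps algebra_simps)

lemma Bf_bilinear: "bilinear (Bf p)"
  unfolding bilinear_def
  by (intro conjI allI linearI) (simp_all add: Bf_def Nf_add1 Nf_add2 Nf_sc1 Nf_sc2 add_divide_distrib)

lemma Bf_sym: "Bf p a b = Bf p b a"
  unfolding Bf_def Nf_def by (simp add: oinner_sym algebra_simps)

lemma Bf_diag: "Bf p w w = ds2 p w"
  unfolding Bf_def Nf_def ds2_def Df_def T_def onorm2_def Let_def by simp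

lemmas rp_intros = rp_add rp_mult rp_diff rp_uminus rp_power rp_var rp_const

lemma rpoly_F: "rpoly (\<lambda>x. onorm2 (ucoord x) + onorm2 (vcoord x))"
  unfolding ucoord_def vcoord_def oct_block_def onorm2_expand
  by (intro rp_intros)

lemma rpoly_Df: "rpoly Df"
  unfolding Df_def ucoord_def vcoord_def oct_block_def onorm2_expand
  by (intro rp_intros)

lemma rpoly_Nf: "rpoly (\<lambda>p. Nf p a b)"
  unfolding Nf_def T_def ucoord_def vcoord_def oct_block_def onorm2_expand
  by (simp only: omult.simps oconj.simps qmult.simps qconj.simps qadd.simps qneg.simps ore.simps qre.simps oinner_def)
    (intro rp_intros)

lemma OH2_eq: "OH2 = {x. onorm2 (ucoord x) + onorm2 (vcoord x) < 1}"
  by (simp add: OH2_def)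

lemma open_OH2: "open OH2"
  unfolding OH2_eq by (rule open_Collect_less[OF rpoly_cont[OF rpoly_F] continuous_on_const])

lemma F_scale: "onorm2 (ucoord (t *\<^sub>R x)) + onorm2 (vcoord (t *\<^sub>R x)) = t^2 * (onorm2 (ucoord x) + onorm2 (vcoord x))"
  unfolding ucoord_def vcoord_def oct_block_def onorm2_expand
  by (simp add: power_mult_distrib algebra_simps)

lemma starlike_OH2: "starlike OH2"
  unfolding starlike_def
proof (intro bexI[of _ 0] ballI subsetI)
  show "0 \<in> OH2" unfolding OH2_eq using F_scale[of 0 0] by simp
  fix x y assume x: "x \<in> OH2" and y: "y \<in> closed_segment 0 x"
  then obtain u where u: "0 \<le> u" "u \<le> 1" "y = u *\<^sub>R x" by (auto simp: in_segment)
  have F0: "0 \<le> onorm2 (ucoord x) + onorm2 (vcoord x)" by (simp add: onorm2_nonneg add_nonneg_nonneg)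
  have "u^2 \<le> 1" using u by (simp add: power_le_one)
  then have "u^2 * (onorm2 (ucoord x) + onorm2 (vcoord x)) \<le> onorm2 (ucoord x) + onorm2 (vcoord x)"
    using F0 by (simp add: mult_left_le_one_le)
  then show "y \<in> OH2" using x F_scale[of u x] unfolding OH2_eq u(3) by simp
qed

lemma sq8_zero:
  fixes a0 a1 a2 a3 a4 a5 a6 a7 :: real
  assumes "a0^2+a1^2+a2^2+a3^2+a4^2+a5^2+a6^2+a7^2 = 0"
  shows "a0 = 0 \<and> a1 = 0 \<and> a2 = 0 \<and> a3 = 0 \<and> a4 = 0 \<and> a5 = 0 \<and> a6 = 0 \<and> a7 = 0"
proof -
  have "a0^2 = 0 \<and> a1^2 = 0 \<and> a2^2 = 0 \<and> a3^2 = 0 \<and> a4^2 = 0 \<and> a5^2 = 0 \<and> a6^2 = 0 \<and> a7^2 = 0"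
    using assms zero_le_power2[of a0] zero_le_power2[of a1] zero_le_power2[of a2] zero_le_power2[of a3]
      zero_le_power2[of a4] zero_le_power2[of a5] zero_le_power2[of a6] zero_le_power2[of a7]
    by linarith
  then show ?thesis by simp
qed

lemma nonzero_pos:
  assumes "w \<noteq> 0"
  shows "onorm2 (ucoord w) + onorm2 (vcoord w) > 0"
proof (rule ccontr)
  assume "\<not> ?thesis"
  then have "onorm2 (ucoord w) = 0" "onorm2 (vcoord w) = 0"
    using onorm2_nonneg[of "ucoord w"] onorm2_nonneg[of "vcoord w"] by linarith+
  then have Z1: "(w$0)^2 + (w$1)^2 + (w$2)^2 + (w$3)^2 + (w$4)^2 + (w$5)^2 + (w$6)^2 + (w$7)^2 = 0"
     and Z2: "(w$8)^2 + (w$9)^2 + (w$10)^2 + (w$11)^2 + (w$12)^2 + (w$13)^2 + (w$14)^2 + (w$15)^2 = 0"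
    unfolding ucoord_def vcoord_def oct_block_def onorm2_expand by simp_all
  then have Z: "w$0 = 0" "w$1 = 0" "w$2 = 0" "w$3 = 0" "w$4 = 0" "w$5 = 0" "w$6 = 0" "w$7 = 0"
     "w$8 = 0" "w$9 = 0" "w$10 = 0" "w$11 = 0" "w$12 = 0" "w$13 = 0" "w$14 = 0" "w$15 = 0"
    using sq8_zero[OF Z1] sq8_zero[OF Z2]
    by simp_all
  have "w = 0"
  proof (subst vec_eq_iff, intro allI)
    fix i :: 16
    obtain k where "k < 16" "i = of_nat k" using idx16 by blast
    moreover have "k=0 \<or> k=1 \<or> k=2 \<or> k=3 \<or> k=4 \<or> k=5 \<or> k=6 \<or> k=7 \<or> k=8 \<or> k=9 \<or> k=10 \<or> k=11 \<or> k=12 \<or> k=13 \<or> k=14 \<or> k=15"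
      using \<open>k < 16\<close> by arith
    ultimately show "w $ i = 0 $ i" using Z by (elim disjE) simp_all
  qed
  then show False using assms by simp
qed

lemma Df_pos: "p \<in> OH2 \<Longrightarrow> Df p > 0"
  unfolding OH2_eq Df_def by simp

lemma Nf_pos:
  assumes p: "p \<in> OH2" and w: "w \<noteq> 0"
  shows "Nf p w w > 0"
proof -
  define U where "U = onorm2 (ucoord p)"
  define V where "V = onorm2 (vcoord p)"
  define A where "A = onorm2 (ucoord w)"
  define B where "B = onorm2 (vcoord w)"
  define R where "R = T (omult (ucoord p) (oconj (vcoord p))) (vcoord w) (ucoord w)"
  have N: "Nf p w w = A*(1-V) + B*(1-U) + 2*R"
    unfolding Nf_def A_def B_def U_def V_def R_def onorm2_def by simp
  have "R^2 \<le> onorm2 (omult (ucoord p) (oconj (vcoord p))) * onorm2 (omult (vcoord w) (oconj (ucoord w)))"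
    unfolding R_def T_def by (rule ore_cs)
  also have "\<dots> = U*V*(A*B)"
    unfolding U_def V_def A_def B_def eight onorm2_conj by simp
  finally have R: "R^2 \<le> U*V*(A*B)" .
  have h1: "A \<ge> 0" "B \<ge> 0" "U \<ge> 0" "V \<ge> 0" by (simp_all add: A_def B_def U_def V_def onorm2_nonneg)
  have h2: "U + V < 1" using p by (simp add: U_def V_def OH2_eq)
  have h3: "A + B > 0" using nonzero_pos[OF w] by (simp add: A_def B_def)
  show ?thesis unfolding N using key_ineq[OF h1 h2 h3 R] .
qed

theorem theorem8p2:
  shows "open OH2 \<and> simply_connected OH2 \<and> DIM(real^16) = 16 \<and>
    (\<exists>B :: real^16 \<Rightarrow> real^16 \<Rightarrow> real^16 \<Rightarrow> real.
       (\<forall>p\<in>OH2. bilinear (B p) \<and> (\<forall>a b. B p a b = B p b a)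
                 \<and> (\<forall>w. B p w w = ds2 p w)
                 \<and> (\<forall>w. w \<noteq> 0 \<longrightarrow> B p w w > 0))
       \<and> (\<forall>a b. smooth_on OH2 (\<lambda>p. B p a b)))"
proof (intro conjI exI[of _ Bf] ballI allI impI)
  show "open OH2" by (rule open_OH2)
  show "simply_connected OH2" by (rule starlike_imp_simply_connected[OF starlike_OH2])
  show "DIM(real^16) = 16" by simp
  fix p assume p: "p \<in> OH2"
  show "bilinear (Bf p)" by (rule Bf_bilinear)
  show "Bf p a b = Bf p b a" for a b by (rule Bf_sym)
  show "Bf p w w = ds2 p w" for w by (rule Bf_diag)
  show "Bf p w w > 0" if "w \<noteq> 0" for w
    unfolding Bf_def using Nf_pos[OF p that] Df_pos[OF p] by simp
next
  fix a b
  show "smooth_on OH2 (\<lambda>p. Bf p a b)"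
  proof (rule smooth_rat[OF open_OH2 rpoly_Nf])
    show "rpoly (\<lambda>p. Df p ^ 2)" by (rule rp_power[OF rpoly_Df])
    show "\<forall>p\<in>OH2. Df p ^ 2 \<noteq> 0" using Df_pos by fastforce
    show "\<forall>p\<in>OH2. Bf p a b = Nf p a b / Df p ^ 2" by (simp add: Bf_def)
  qed
qed

end
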